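(* Let $R = R_1\times\cdots\times R_t$ be a finite commutative ring with identity, where each $R_i$ is a local ring. Then the involutory Cayley graph $\Gamma(R)$ is connected if and only if at most one of the factors $R_i$ has even order, that factor (if it exists) has connected involutory Cayley graph $\Gamma(R_i)$, and every other factor $R_j$ is isomorphic to $\mathbb{Z}_{p_j^{n_j}}$ for some odd prime $p_j$ and positive integer $n_j$.
   Context: All rings are finite, commutative, with nonzero identity. An element $u$ of a ring $R$ is an involution if $u^2=1$; $\mathrm{Inv}(R)$ denotes the set of involutions. The involutory Cayley graph $\Gamma(R)$ is the simple undirected graph with vertex set $R$ in which distinct $x,y$ are adjacent iff $(x-y)^2=1$, i.e. the Cayley graph of $(R,+)$ with respect to $\mathrm{Inv}(R)$; it is $|\mathrm{Inv}(R)|$-regular. *)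

theory Defs
  imports "HOL-Algebra.Algebra" "HOL-Number_Theory.Residues"
begin

definition Inv :: "('a, 'm) ring_scheme \<Rightarrow> 'a set" where
  "Inv R = {u \<in> carrier R. u \<otimes>\<^bsub>R\<^esub> u = \<one>\<^bsub>R\<^esub>}"

definition inv_cayley_edges :: "('a, 'm) ring_scheme \<Rightarrow> ('a \<times> 'a) set" where
  "inv_cayley_edges R = {(x, y). x \<in> carrier R \<and> y \<in> carrier R \<and> x \<noteq> y \<and>
      (x \<ominus>\<^bsub>R\<^esub> y) \<otimes>\<^bsub>R\<^esub> (x \<ominus>\<^bsub>R\<^esub> y) = \<one>\<^bsub>R\<^esub>}"

definition inv_cayley_connected :: "('a, 'm) ring_scheme \<Rightarrow> bool" where
  "inv_cayley_connected R \<longleftrightarrow>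
     (\<forall>x \<in> carrier R. \<forall>y \<in> carrier R. (x, y) \<in> (inv_cayley_edges R)\<^sup>*)"

definition local_ring :: "('a, 'm) ring_scheme \<Rightarrow> bool" where
  "local_ring R \<longleftrightarrow> cring R \<and> (\<exists>!I. maximalideal I R)"

end

theory Submission
  imports Defs "HOL-Library.Z2"
begin

lemma P_cons_add:
  assumes "x \<in> carrier R" "y \<in> carrier R" "xs \<in> carrier (RDirProd_list Rs)" "ys \<in> carrier (RDirProd_list Rs)"
  shows "(x # xs) \<oplus>\<^bsub>RDirProd_list (R # Rs)\<^esub> (y # ys) = (x \<oplus>\<^bsub>R\<^esub> y) # (xs \<oplus>\<^bsub>RDirProd_list Rs\<^esub> ys)"
proof -
  have inj: "inj_on (\<lambda>(a, as). a # as) (carrier (RDirProd R (RDirProd_list Rs)))"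
    by (rule inj_on_RDirProd_carrier)
  have c1: "(x, xs) \<in> carrier (RDirProd R (RDirProd_list Rs))" "(y, ys) \<in> carrier (RDirProd R (RDirProd_list Rs))"
    using assms by (auto simp: RDirProd_carrier)
  have i1: "inv_into (carrier (RDirProd R (RDirProd_list Rs))) (\<lambda>(a, as). a # as) (x # xs) = (x, xs)"
    using inv_into_f_f[OF inj c1(1)] by simp
  have i2: "inv_into (carrier (RDirProd R (RDirProd_list Rs))) (\<lambda>(a, as). a # as) (y # ys) = (y, ys)"
    using inv_into_f_f[OF inj c1(2)] by simp
  have e: "RDirProd_list (R # Rs) = image_ring (\<lambda>(a, as). a # as) (RDirProd R (RDirProd_list Rs))"
    unfolding RDirProd_list_def by simp
  have a: "(x, xs) \<oplus>\<^bsub>RDirProd R (RDirProd_list Rs)\<^esub> (y, ys) = (x \<oplus>\<^bsub>R\<^esub> y, xs \<oplus>\<^bsub>RDirProd_list Rs\<^esub> ys)"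
    by (simp add: RDirProd_def DirProd_def monoid.defs)
  show ?thesis
    unfolding e by (simp add: image_ring_def monoid.defs i1 i2 a)
qed

lemma P_cons_mult:
  assumes "x \<in> carrier R" "y \<in> carrier R" "xs \<in> carrier (RDirProd_list Rs)" "ys \<in> carrier (RDirProd_list Rs)"
  shows "(x # xs) \<otimes>\<^bsub>RDirProd_list (R # Rs)\<^esub> (y # ys) = (x \<otimes>\<^bsub>R\<^esub> y) # (xs \<otimes>\<^bsub>RDirProd_list Rs\<^esub> ys)"
proof -
  have inj: "inj_on (\<lambda>(a, as). a # as) (carrier (RDirProd R (RDirProd_list Rs)))"
    by (rule inj_on_RDirProd_carrier)
  have c1: "(x, xs) \<in> carrier (RDirProd R (RDirProd_list Rs))" "(y, ys) \<in> carrier (RDirProd R (RDirProd_list Rs))"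
    using assms by (auto simp: RDirProd_carrier)
  have i1: "inv_into (carrier (RDirProd R (RDirProd_list Rs))) (\<lambda>(a, as). a # as) (x # xs) = (x, xs)"
    using inv_into_f_f[OF inj c1(1)] by simp
  have i2: "inv_into (carrier (RDirProd R (RDirProd_list Rs))) (\<lambda>(a, as). a # as) (y # ys) = (y, ys)"
    using inv_into_f_f[OF inj c1(2)] by simp
  have e: "RDirProd_list (R # Rs) = image_ring (\<lambda>(a, as). a # as) (RDirProd R (RDirProd_list Rs))"
    unfolding RDirProd_list_def by simp
  have a: "(x, xs) \<otimes>\<^bsub>RDirProd R (RDirProd_list Rs)\<^esub> (y, ys) = (x \<otimes>\<^bsub>R\<^esub> y, xs \<otimes>\<^bsub>RDirProd_list Rs\<^esub> ys)"
    by (simp add: RDirProd_def DirProd_def monoid.defs)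
  show ?thesis
    unfolding e by (simp add: image_ring_def image_group_def monoid.defs i1 i2 a)
qed

lemma P_add_nth:
  assumes "xs \<in> carrier (RDirProd_list Rs)" "ys \<in> carrier (RDirProd_list Rs)" "i < length Rs"
  shows "(xs \<oplus>\<^bsub>RDirProd_list Rs\<^esub> ys) ! i = xs ! i \<oplus>\<^bsub>Rs ! i\<^esub> ys ! i"
  using assms
proof (induct Rs arbitrary: xs ys i)
  case Nil then show ?case by simp
next
  case (Cons R Rs)
  from Cons.prems obtain x xs' where x: "xs = x # xs'" "x \<in> carrier R" "xs' \<in> carrier (RDirProd_list Rs)"
    by (auto simp: RDirProd_list_carrier)
  from Cons.prems obtain y ys' where y: "ys = y # ys'" "y \<in> carrier R" "ys' \<in> carrier (RDirProd_list Rs)"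
    by (auto simp: RDirProd_list_carrier)
  show ?case using Cons x y by (cases i) (auto simp: P_cons_add)
qed

lemma P_mult_nth:
  assumes "xs \<in> carrier (RDirProd_list Rs)" "ys \<in> carrier (RDirProd_list Rs)" "i < length Rs"
  shows "(xs \<otimes>\<^bsub>RDirProd_list Rs\<^esub> ys) ! i = xs ! i \<otimes>\<^bsub>Rs ! i\<^esub> ys ! i"
  using assms
proof (induct Rs arbitrary: xs ys i)
  case Nil then show ?case by simp
next
  case (Cons R Rs)
  from Cons.prems obtain x xs' where x: "xs = x # xs'" "x \<in> carrier R" "xs' \<in> carrier (RDirProd_list Rs)"
    by (auto simp: RDirProd_list_carrier)
  from Cons.prems obtain y ys' where y: "ys = y # ys'" "y \<in> carrier R" "ys' \<in> carrier (RDirProd_list Rs)"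
    by (auto simp: RDirProd_list_carrier)
  show ?case using Cons x y by (cases i) (auto simp: P_cons_mult)
qed

lemma P_one_nth: "i < length Rs \<Longrightarrow> \<one>\<^bsub>RDirProd_list Rs\<^esub> ! i = \<one>\<^bsub>Rs ! i\<^esub>"
  unfolding RDirProd_list_one
  by (induct Rs arbitrary: i) (auto simp: nth_Cons split: nat.splits)

lemma P_zero_nth: "i < length Rs \<Longrightarrow> \<zero>\<^bsub>RDirProd_list Rs\<^esub> ! i = \<zero>\<^bsub>Rs ! i\<^esub>"
  unfolding RDirProd_list_zero
  by (induct Rs arbitrary: i) (auto simp: nth_Cons split: nat.splits)

context ring
begin

abbreviation "EE \<equiv> inv_cayley_edges R"

lemma EE_iff: "(x, y) \<in> EE \<longleftrightarrow> x \<in> carrier R \<and> y \<in> carrier R \<and> x \<noteq> y \<and> (x \<ominus> y) \<otimes> (x \<ominus> y) = \<one>"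
  unfolding inv_cayley_edges_def by simp

lemma EE_translate:
  assumes "(x, y) \<in> EE\<^sup>*" "z \<in> carrier R"
  shows "(x \<oplus> z, y \<oplus> z) \<in> EE\<^sup>*"
  using assms(1)
proof (induct rule: rtrancl_induct)
  case base then show ?case by simp
next
  case (step y w)
  have "(y \<oplus> z, w \<oplus> z) \<in> EE"
  proof -
    have yw: "y \<in> carrier R" "w \<in> carrier R" "y \<noteq> w" "(y \<ominus> w) \<otimes> (y \<ominus> w) = \<one>"
      using step(2) by (auto simp: EE_iff)
    have "(y \<oplus> z) \<ominus> (w \<oplus> z) = y \<ominus> w"
      using yw assms(2) by (simp add: a_minus_def minus_add a_ac r_neg l_neg r_neg1 r_neg2)
    moreover have "y \<oplus> z \<noteq> w \<oplus> z" using yw assms(2) by simp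
    ultimately show ?thesis using yw assms(2) by (simp add: EE_iff)
  qed
  then show ?case using step(3) by simp
qed

lemma EE_sym1: "(x, y) \<in> EE \<Longrightarrow> (y, x) \<in> EE"
proof -
  assume a: "(x, y) \<in> EE"
  then have xy: "x \<in> carrier R" "y \<in> carrier R" "x \<noteq> y" "(x \<ominus> y) \<otimes> (x \<ominus> y) = \<one>"
    by (auto simp: EE_iff)
  have "y \<ominus> x = \<ominus> (x \<ominus> y)" using xy by (simp add: a_minus_def minus_add a_ac r_neg l_neg r_neg1 r_neg2)
  then have "(y \<ominus> x) \<otimes> (y \<ominus> x) = (x \<ominus> y) \<otimes> (x \<ominus> y)" using xy
    by (simp add: l_minus r_minus)
  then show ?thesis using xy by (simp add: EE_iff)
qed

lemma EE_sym: "(x, y) \<in> EE\<^sup>* \<Longrightarrow> (y, x) \<in> EE\<^sup>*"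
  by (induct rule: rtrancl_induct) (auto intro: EE_sym1 converse_rtrancl_into_rtrancl)

lemma conn_iff0: "inv_cayley_connected R \<longleftrightarrow> (\<forall>y \<in> carrier R. (\<zero>, y) \<in> EE\<^sup>*)"
proof
  assume "inv_cayley_connected R" then show "\<forall>y \<in> carrier R. (\<zero>, y) \<in> EE\<^sup>*"
    unfolding inv_cayley_connected_def by auto
next
  assume h: "\<forall>y \<in> carrier R. (\<zero>, y) \<in> EE\<^sup>*"
  show "inv_cayley_connected R" unfolding inv_cayley_connected_def
  proof (intro ballI)
    fix x y assume x: "x \<in> carrier R" and y: "y \<in> carrier R"
    have "(\<zero> \<oplus> x, (y \<ominus> x) \<oplus> x) \<in> EE\<^sup>*"
      using EE_translate[OF h[rule_format, of "y \<ominus> x"] x] x y by simp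
    moreover have "(y \<ominus> x) \<oplus> x = y" using x y by (simp add: a_minus_def a_assoc l_neg)
    ultimately show "(x, y) \<in> EE\<^sup>*" using x by simp
  qed
qed

lemma reach_closed:
  assumes "(\<zero>, y) \<in> EE\<^sup>*" "\<zero> \<in> H"
    and "\<And>y u. y \<in> H \<Longrightarrow> y \<in> carrier R \<Longrightarrow> u \<in> Inv R \<Longrightarrow> y \<ominus> u \<in> H"
  shows "y \<in> H"
  using assms(1)
proof (induct rule: rtrancl_induct)
  case base then show ?case using assms(2) by simp
next
  case (step y w)
  have yw: "y \<in> carrier R" "w \<in> carrier R" "y \<noteq> w" "(y \<ominus> w) \<otimes> (y \<ominus> w) = \<one>"
    using step(2) by (auto simp: EE_iff)
  have "y \<ominus> w \<in> Inv R" using yw unfolding Inv_def by simp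
  then have "y \<ominus> (y \<ominus> w) \<in> H" using assms(3) step(3) yw by simp
  moreover have "y \<ominus> (y \<ominus> w) = w" using yw
    by (simp add: a_minus_def minus_add a_assoc[symmetric] r_neg)
  ultimately show ?case by simp
qed

lemma reach_in_carrier: "(\<zero>, y) \<in> EE\<^sup>* \<Longrightarrow> y \<in> carrier R"
  by (induct rule: rtrancl_induct) (auto simp: EE_iff)

lemma reach_add:
  assumes "(\<zero>, a) \<in> EE\<^sup>*" "(\<zero>, b) \<in> EE\<^sup>*"
  shows "(\<zero>, a \<oplus> b) \<in> EE\<^sup>*"
proof -
  have a: "a \<in> carrier R" and b: "b \<in> carrier R" using assms reach_in_carrier by auto
  have "(\<zero> \<oplus> a, b \<oplus> a) \<in> EE\<^sup>*" using EE_translate[OF assms(2) a] .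
  then have "(a, a \<oplus> b) \<in> EE\<^sup>*" using a b by (simp add: a_comm)
  then show ?thesis using assms(1) by simp
qed

lemma reach_neg:
  assumes "(\<zero>, a) \<in> EE\<^sup>*"
  shows "(\<zero>, \<ominus> a) \<in> EE\<^sup>*"
proof -
  have a: "a \<in> carrier R" using assms reach_in_carrier by auto
  have "(\<zero> \<oplus> \<ominus> a, a \<oplus> \<ominus> a) \<in> EE\<^sup>*" using EE_translate[OF assms, of "\<ominus> a"] a by simp
  then have "(\<ominus> a, \<zero>) \<in> EE\<^sup>*" using a by (simp add: r_neg)
  then show ?thesis by (rule EE_sym)
qed

lemma reach_sub:
  assumes "(\<zero>, a) \<in> EE\<^sup>*" "(\<zero>, b) \<in> EE\<^sup>*"
  shows "(\<zero>, a \<ominus> b) \<in> EE\<^sup>*"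
  using reach_add[OF assms(1) reach_neg[OF assms(2)]] by (simp add: a_minus_def)

lemma reach_inv:
  assumes "u \<in> Inv R" shows "(\<zero>, u) \<in> EE\<^sup>*"
proof (cases "u = \<zero>")
  case True then show ?thesis by simp
next
  case False
  have u: "u \<in> carrier R" "u \<otimes> u = \<one>" using assms by (auto simp: Inv_def)
  have "(\<zero> \<ominus> u) \<otimes> (\<zero> \<ominus> u) = u \<otimes> u" using u by (simp add: a_minus_def l_minus r_minus)
  then have "(\<zero>, u) \<in> EE" using u False by (simp add: EE_iff)
  then show ?thesis by simp
qed

lemma reach_pow:
  assumes "(\<zero>, a) \<in> EE\<^sup>*" shows "(\<zero>, (add_pow R ((k::nat)) a)) \<in> EE\<^sup>*"
proof (induct k)
  case 0 then show ?case by simp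
next
  case (Suc k)
  have a: "a \<in> carrier R" using assms reach_in_carrier by auto
  have "(add_pow R (Suc k) a) = (add_pow R (k) a) \<oplus> a" using a by simp
  then show ?case using reach_add[OF Suc assms] by simp
qed

end

locale flocal = cring +
  fixes M
  assumes M_max: "maximalideal M R"
    and M_uniq: "\<And>I. maximalideal I R \<Longrightarrow> I = M"
    and fin: "finite (carrier R)"
begin

lemma M_ideal: "ideal M R" using M_max by (simp add: maximalideal_def)

lemma M_prime: "primeideal M R" using maximalideal_prime[OF M_max] .

lemma one_notin_M: "\<one> \<notin> M"
  using M_max ideal.one_imp_carrier[OF M_ideal] maximalideal.I_notcarr by metis

lemma zero_in_M: "\<zero> \<in> M"
  using M_ideal by (simp add: additive_subgroup.zero_closed ideal.axioms(1))

lemma one_neq_zero: "\<one> \<noteq> \<zero>"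
  using one_notin_M zero_in_M by auto

lemma M_sub: "M \<subseteq> carrier R"
  using M_ideal by (simp add: ideal.Icarr subsetI)

lemma unit_notin_M: assumes "x \<in> Units R" shows "x \<notin> M"
proof
  assume xM: "x \<in> M"
  obtain y where y: "y \<in> carrier R" "y \<otimes> x = \<one>" using assms by (auto simp: Units_def)
  have "y \<otimes> x \<in> M" using xM y(1) M_ideal by (simp add: ideal.I_l_closed)
  then show False using y one_notin_M by simp
qed

lemma nonunit_in_M:
  assumes x: "x \<in> carrier R" and nu: "x \<notin> Units R"
  shows "x \<in> M"
proof -
  define JJ where "JJ = {J. ideal J R \<and> \<one> \<notin> J \<and> x \<in> J}"
  have "JJ \<subseteq> Pow (carrier R)" unfolding JJ_def using ideal.Icarr by (auto intro: ideal.Icarr)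
  then have finJJ: "finite JJ" using fin by (meson finite_Pow_iff rev_finite_subset)
  have P: "PIdl x \<in> JJ"
  proof -
    have "ideal (PIdl x) R" using cgenideal_ideal[OF x] .
    moreover have "x \<in> PIdl x" using cgenideal_self[OF x] .
    moreover have "\<one> \<notin> PIdl x"
    proof
      assume "\<one> \<in> PIdl x"
      then obtain y where y: "y \<in> carrier R" "\<one> = y \<otimes> x" unfolding cgenideal_def by auto
      then have "x \<otimes> y = \<one>" "y \<otimes> x = \<one>" using x m_comm by auto
      then have "x \<in> Units R" using x y(1) unfolding Units_def by blast
      then show False using nu by simp
    qed
    ultimately show ?thesis unfolding JJ_def by simp
  qed
  then have ne: "JJ \<noteq> {}" by auto
  obtain J where J: "J \<in> JJ" "card J = Max (card ` JJ)"
  proof -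
    have "Max (card ` JJ) \<in> card ` JJ" using Max_in[of "card ` JJ"] finJJ ne by simp
    then show ?thesis using that by (metis imageE)
  qed
  have Jmax: "maximalideal J R"
  proof (rule maximalidealI)
    show "ideal J R" using J unfolding JJ_def by simp
    show "carrier R \<noteq> J" using J unfolding JJ_def by auto
    fix J' assume J': "ideal J' R" "J \<subseteq> J'" "J' \<subseteq> carrier R"
    show "J' = J \<or> J' = carrier R"
    proof (cases "\<one> \<in> J'")
      case True then show ?thesis using ideal.one_imp_carrier[OF J'(1)] by simp
    next
      case False
      then have "J' \<in> JJ" using J'(1,2) J(1) unfolding JJ_def by auto
      then have "card J' \<le> card J" using J(2) finJJ by simp
      moreover have "finite J'" using J'(3) fin finite_subset by blast
      ultimately have "J = J'" using card_seteq[OF _ J'(2)] by simp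
      then show ?thesis by simp
    qed
  qed
  then have "J = M" using M_uniq by simp
  then show ?thesis using J(1) unfolding JJ_def by simp
qed

lemma pow_card: assumes "x \<in> carrier R" shows "add_pow R (card (carrier R)) x = \<zero>"
proof -
  have "group (add_monoid R)" by (rule a_group)
  then have "x [^]\<^bsub>add_monoid R\<^esub> order (add_monoid R) = \<one>\<^bsub>add_monoid R\<^esub>"
    using group.pow_order_eq_1[of "add_monoid R" x] assms by simp
  then show ?thesis by (simp add: add_pow_def order_def)
qed

end

lemma bit_of_nat_zero_iff: "(of_nat n :: bit) = 0 \<longleftrightarrow> even n"
  by (induct n) auto

lemma card_even_involution:
  assumes "finite XX" "\<And>x. x \<in> XX \<Longrightarrow> g x \<in> XX" "\<And>x. x \<in> XX \<Longrightarrow> g (g x) = x" "\<And>x. x \<in> XX \<Longrightarrow> g x \<noteq> x"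
  shows "even (card XX)"
proof -
  have "(\<Sum>x\<in>XX. (1::bit)) = 0"
    by (rule sum_involution_eq_0[where h = g]) (use assms in auto)
  then show ?thesis by (simp add: bit_of_nat_zero_iff)
qed

context ring
begin

lemma nat_pow_mult': "a \<in> carrier R \<Longrightarrow> (add_pow R ((n::nat)) a) \<oplus> (add_pow R (m) a) = (add_pow R (n + m) a)"
  using add.nat_pow_mult by simp

lemma nat_pow_pow': "a \<in> carrier R \<Longrightarrow> (add_pow R ((m::nat)) ((add_pow R (n) a))) = (add_pow R (n * m) a)"
  using add.nat_pow_pow by simp

lemma unit_cancel: "a \<in> Units R \<Longrightarrow> b \<in> carrier R \<Longrightarrow> a \<otimes> b = \<zero> \<Longrightarrow> b = \<zero>"
proof -
  assume a: "a \<in> Units R" and b: "b \<in> carrier R" and ab: "a \<otimes> b = \<zero>"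
  have "inv a \<otimes> (a \<otimes> b) = b" using a b by (simp add: m_assoc[symmetric] Units_closed Units_inv_closed)
  then show ?thesis using ab a by (simp add: Units_inv_closed)
qed

end

context flocal
begin

lemma odd_two_unit:
  assumes "odd (card (carrier R))"
  shows "\<one> \<oplus> \<one> \<in> Units R"
proof -
  define m where "m = card (carrier R)"
  define k where "k = (m + 1) div 2"
  have mk: "m + 1 = 2 * k" using assms unfolding k_def m_def by simp
  have two: "(add_pow R ((2::nat)) \<one>) = \<one> \<oplus> \<one>" by (simp add: numeral_2_eq_2)
  have "(\<one> \<oplus> \<one>) \<otimes> ((add_pow R (k) \<one>)) = (add_pow R (k) (\<one> \<oplus> \<one>))"
    by (simp add: add_pow_rdistr)
  also have "\<dots> = (add_pow R (2 * k) \<one>)" using nat_pow_pow'[of \<one> k 2] two by (simp add: mult.commute)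
  also have "\<dots> = add_pow R (m + 1) \<one>" using mk by simp
  also have "\<dots> = (add_pow R (m) \<one>) \<oplus> (add_pow R (1::nat) \<one>)" by (rule nat_pow_mult'[symmetric]) simp
  also have "\<dots> = \<one>" using pow_card[of \<one>] unfolding m_def by simp
  finally have e: "(\<one> \<oplus> \<one>) \<otimes> ((add_pow R (k) \<one>)) = \<one>" .
  then have "((add_pow R (k) \<one>)) \<otimes> (\<one> \<oplus> \<one>) = \<one>" by (simp add: m_comm)
  then show ?thesis using e unfolding Units_def by auto
qed

lemma even_two_M:
  assumes "even (card (carrier R))"
  shows "\<one> \<oplus> \<one> \<in> M"
proof (rule ccontr)
  assume "\<one> \<oplus> \<one> \<notin> M"
  then have u: "\<one> \<oplus> \<one> \<in> Units R" using nonunit_in_M[of "\<one> \<oplus> \<one>"] by blast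
  define XX where "XX = carrier R - {\<zero>}"
  have "even (card XX)"
  proof (rule card_even_involution[where g = "\<lambda>x. \<ominus> x"])
    show "finite XX" using fin unfolding XX_def by simp
    fix x assume x: "x \<in> XX"
    then have xc: "x \<in> carrier R" and x0: "x \<noteq> \<zero>" unfolding XX_def by auto
    show "\<ominus> x \<in> XX" using xc x0 unfolding XX_def by (auto simp: minus_equality)
    show "\<ominus> (\<ominus> x) = x" using xc by simp
    show "\<ominus> x \<noteq> x"
    proof
      assume "\<ominus> x = x"
      then have "x \<oplus> x = \<zero>" using xc by (metis r_neg)
      then have "(\<one> \<oplus> \<one>) \<otimes> x = \<zero>" using xc by (simp add: l_distr)
      then show False using unit_cancel[OF u xc] x0 by simp
    qed
  qed
  moreover have "card (carrier R) = card XX + 1"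
  proof -
    have "card (carrier R) > 0" using fin card_gt_0_iff zero_closed by blast
    then show ?thesis using fin unfolding XX_def by (simp add: card_Diff_singleton)
  qed
  ultimately show False using assms by simp
qed

lemma odd_inv:
  assumes "odd (card (carrier R))" "u \<in> Inv R"
  shows "u = \<one> \<or> u = \<ominus> \<one>"
proof -
  have u: "u \<in> carrier R" "u \<otimes> u = \<one>" using assms(2) by (auto simp: Inv_def)
  have prod: "(u \<ominus> \<one>) \<otimes> (u \<oplus> \<one>) = \<zero>"
  proof -
    show ?thesis using u by algebra
  qed
  have diff: "(u \<oplus> \<one>) \<ominus> (u \<ominus> \<one>) = \<one> \<oplus> \<one>"
    using u by algebra
  show ?thesis
  proof (cases "u \<ominus> \<one> \<in> M")
    case False
    then have "u \<ominus> \<one> \<in> Units R" using nonunit_in_M[of "u \<ominus> \<one>"] u by blast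
    then have "u \<oplus> \<one> = \<zero>" using unit_cancel prod u by simp
    then have "u = \<ominus> \<one>" using u by (simp add: minus_equality[symmetric] a_comm)
    then show ?thesis by simp
  next
    case True
    show ?thesis
    proof (cases "u \<oplus> \<one> \<in> M")
      case False
      then have "u \<oplus> \<one> \<in> Units R" using nonunit_in_M[of "u \<oplus> \<one>"] u by blast
      moreover have "(u \<oplus> \<one>) \<otimes> (u \<ominus> \<one>) = \<zero>" using prod u by (simp add: m_comm)
      ultimately have "u \<ominus> \<one> = \<zero>" using unit_cancel u by simp
      then have "u = \<one>" using u by (simp add: r_right_minus_eq)
      then show ?thesis by simp
    next
      case True2: True
      have "(u \<oplus> \<one>) \<ominus> (u \<ominus> \<one>) \<in> M"
        using True True2 M_ideal by (simp add: ideal.axioms(1) additive_subgroup.a_closed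
              additive_subgroup.a_inv_closed a_minus_def)
      then show ?thesis using diff unit_notin_M[OF odd_two_unit[OF assms(1)]] by simp
    qed
  qed
qed

lemma even_inv:
  assumes "even (card (carrier R))" "u \<in> Inv R"
  shows "u \<ominus> \<one> \<in> M"
proof -
  have u: "u \<in> carrier R" "u \<otimes> u = \<one>" using assms(2) by (auto simp: Inv_def)
  have "(u \<ominus> \<one>) \<otimes> (u \<ominus> \<one>) = (\<one> \<oplus> \<one>) \<otimes> (\<one> \<ominus> u)"
    using u by algebra
  also have "\<dots> \<in> M" using even_two_M[OF assms(1)] u M_ideal by (simp add: ideal.I_r_closed)
  finally have "(u \<ominus> \<one>) \<otimes> (u \<ominus> \<one>) \<in> M" .
  moreover have "u \<ominus> \<one> \<in> carrier R" using u by simp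
  ultimately show ?thesis using primeideal.I_prime[OF M_prime] by blast
qed

end

lemma hom_add_pow:
  assumes "h \<in> ring_hom A B" "x \<in> carrier A" "ring A" "ring B"
  shows "h (add_pow A (k::nat) x) = add_pow B k (h x)"
proof (induct k)
  case 0
  have "h \<zero>\<^bsub>A\<^esub> = \<zero>\<^bsub>B\<^esub>" 
    using ring_hom_zero[OF assms(1) assms(3) assms(4)] .
  then show ?case by (simp add: add_pow_def)
next
  case (Suc k)
  interpret A: ring A by fact
  have c: "add_pow A k x \<in> carrier A" using assms(2) by simp
  have "h (add_pow A (Suc k) x) = h (add_pow A k x \<oplus>\<^bsub>A\<^esub> x)" by (simp add: add_pow_def)
  also have "\<dots> = h (add_pow A k x) \<oplus>\<^bsub>B\<^esub> h x" using ring_hom_add[OF assms(1) c assms(2)] .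
  finally show ?case using Suc by (simp add: add_pow_def)
qed

lemma res_pow_one:
  assumes "m > (1::int)"
  shows "add_pow (residue_ring m) (k::nat) \<one>\<^bsub>residue_ring m\<^esub> = int k mod m"
proof (induct k)
  case 0 then show ?case by (simp add: add_pow_def residue_ring_def)
next
  case (Suc k)
  have "add_pow (residue_ring m) (Suc k) \<one>\<^bsub>residue_ring m\<^esub> =
     add_pow (residue_ring m) k \<one>\<^bsub>residue_ring m\<^esub> \<oplus>\<^bsub>residue_ring m\<^esub> \<one>\<^bsub>residue_ring m\<^esub>"
    by (simp add: add_pow_def)
  also have "\<dots> = (int k mod m + 1) mod m" using Suc by (simp add: residue_ring_def)
  also have "\<dots> = int (Suc k) mod m" by (simp add: mod_add_right_eq add.commute)
  finally show ?case .
qed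

context flocal
begin

lemma pow_mod: "add_pow R (k::nat) \<one> = add_pow R (k mod card (carrier R)) \<one>"
proof -
  define m where "m = card (carrier R)"
  have "add_pow R k \<one> = add_pow R (m * (k div m) + k mod m) \<one>" by simp
  also have "\<dots> = add_pow R (m * (k div m)) \<one> \<oplus> add_pow R (k mod m) \<one>"
    by (rule nat_pow_mult'[symmetric]) simp
  also have "add_pow R (m * (k div m)) \<one> = add_pow R (k div m) (add_pow R m \<one>)"
    by (rule nat_pow_pow'[symmetric]) simp
  also have "\<dots> = \<zero>" using pow_card[of \<one>] unfolding m_def by simp
  finally show ?thesis unfolding m_def by simp
qed

lemma pow_mult: "add_pow R (a::nat) \<one> \<otimes> add_pow R b \<one> = add_pow R (a * b) \<one>"
proof -
  have "add_pow R a \<one> \<otimes> add_pow R b \<one> = add_pow R a (\<one> \<otimes> add_pow R b \<one>)"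
    by (rule add_pow_ldistr) simp_all
  also have "\<dots> = add_pow R a (add_pow R b \<one>)" by simp
  also have "\<dots> = add_pow R (b * a) \<one>" by (rule nat_pow_pow') simp
  finally show ?thesis by (simp add: mult.commute)
qed

lemma neg_one_pow: "add_pow R (card (carrier R) - 1) \<one> = \<ominus> \<one>"
proof -
  define m where "m = card (carrier R)"
  have m1: "m \<ge> 1" unfolding m_def using fin card_gt_0_iff zero_closed
    by (metis One_nat_def Suc_leI empty_iff)
  have "add_pow R (m - 1) \<one> \<oplus> add_pow R (1::nat) \<one> = add_pow R (m - 1 + 1) \<one>"
    by (rule nat_pow_mult') simp
  also have "\<dots> = \<zero>" using m1 pow_card[of \<one>] unfolding m_def by simp
  finally have "add_pow R (m - 1) \<one> \<oplus> \<one> = \<zero>" by simp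
  then show ?thesis unfolding m_def using minus_equality by simp
qed

lemma odd_reach:
  assumes "odd (card (carrier R))" "(\<zero>, y) \<in> EE\<^sup>*"
  shows "\<exists>k::nat. y = add_pow R k \<one>"
proof -
  have "y \<in> {y. \<exists>k::nat. y = add_pow R k \<one>}"
  proof (rule reach_closed[OF assms(2)])
    show "\<zero> \<in> {y. \<exists>k::nat. y = add_pow R k \<one>}" by (rule CollectI, rule exI[of _ 0]) simp
    fix y u assume y: "y \<in> {y. \<exists>k::nat. y = add_pow R k \<one>}" and yc: "y \<in> carrier R" and u: "u \<in> Inv R"
    then obtain k :: nat where k: "y = add_pow R k \<one>" by auto
    from odd_inv[OF assms(1) u] show "y \<ominus> u \<in> {y. \<exists>k::nat. y = add_pow R k \<one>}"
    proof
      assume "u = \<one>"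
      then have "y \<ominus> u = add_pow R k \<one> \<oplus> add_pow R (card (carrier R) - 1) \<one>"
        using k neg_one_pow by (simp add: a_minus_def)
      also have "\<dots> = add_pow R (k + (card (carrier R) - 1)) \<one>" by (rule nat_pow_mult') simp
      finally show ?thesis by blast
    next
      assume "u = \<ominus> \<one>"
      then have "y \<ominus> u = add_pow R k \<one> \<oplus> add_pow R (1::nat) \<one>"
        using k by (simp add: a_minus_def)
      also have "\<dots> = add_pow R (k + 1) \<one>" by (rule nat_pow_mult') simp
      finally show ?thesis by blast
    qed
  qed
  then show ?thesis by simp
qed

end

lemma residue_ring_ring: "m > (1::int) \<Longrightarrow> ring (residue_ring m)"
  using residues.cring[of m] unfolding residues_def by (simp add: cring.axioms(1))

context flocal
begin

lemma card_gt1: "card (carrier R) > 1"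
proof -
  have "{\<zero>, \<one>} \<subseteq> carrier R" by simp
  then have "card {\<zero>, \<one>} \<le> card (carrier R)" using fin by (rule card_mono[rotated])
  then show ?thesis using one_neq_zero by simp
qed

lemma prime_subring_iso:
  assumes odd: "odd (card (carrier R))"
    and all: "\<forall>a\<in>carrier R. \<exists>k::nat. a = add_pow R k \<one>"
  shows "\<exists>p n. Factorial_Ring.prime (p::nat) \<and> odd p \<and> n > 0 \<and> R \<simeq> residue_ring (int p ^ n)"
proof -
  define m where "m = card (carrier R)"
  define \<psi> where "\<psi> = (\<lambda>k::nat. add_pow R k \<one>)"
  have m1: "m > 1" unfolding m_def using card_gt1 .
  have psic: "\<psi> k \<in> carrier R" for k unfolding \<psi>_def by simp
  have psimod: "\<psi> k = \<psi> (k mod m)" for k unfolding \<psi>_def m_def by (rule pow_mod)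
  have psimult: "\<psi> a \<otimes> \<psi> b = \<psi> (a * b)" for a b unfolding \<psi>_def by (rule pow_mult)
  have psiadd: "\<psi> a \<oplus> \<psi> b = \<psi> (a + b)" for a b unfolding \<psi>_def by (rule nat_pow_mult') simp
  have img: "\<psi> ` {..<m} = carrier R"
  proof
    show "\<psi> ` {..<m} \<subseteq> carrier R" using psic by auto
    show "carrier R \<subseteq> \<psi> ` {..<m}"
    proof
      fix a assume "a \<in> carrier R"
      then obtain k where "a = \<psi> k" using all unfolding \<psi>_def by auto
      then have "a = \<psi> (k mod m)" using psimod[of k] by simp
      moreover have "k mod m \<in> {..<m}" using m1 by simp
      ultimately show "a \<in> \<psi> ` {..<m}" by blast
    qed
  qed
  have "card (\<psi> ` {..<m}) = card {..<m}" using img unfolding m_def by simp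
  then have inj: "inj_on \<psi> {..<m}"
    by (rule eq_card_imp_inj_on[OF finite_lessThan])
  have psieq: "\<psi> a = \<psi> b \<Longrightarrow> a mod m = b mod m" for a b
  proof -
    assume "\<psi> a = \<psi> b"
    then have "\<psi> (a mod m) = \<psi> (b mod m)" using psimod[of a] psimod[of b] by simp
    then show ?thesis using inj m1 unfolding inj_on_def by simp
  qed
  have nonunit: "\<psi> p \<in> M" if p: "Factorial_Ring.prime p" "p dvd m" for p
  proof (rule nonunit_in_M[OF psic])
    show "\<psi> p \<notin> Units R"
    proof
      assume "\<psi> p \<in> Units R"
      then obtain y where y: "y \<in> carrier R" "\<psi> p \<otimes> y = \<one>" unfolding Units_def by blast
      obtain k where k: "y = \<psi> k" using all y(1) unfolding \<psi>_def by blast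
      have "\<psi> (p * k) = \<psi> p \<otimes> \<psi> k" by (rule psimult[symmetric])
      also have "\<dots> = \<one>" using y k by simp
      also have "\<one> = \<psi> 1" unfolding \<psi>_def by simp
      finally have "\<psi> (p * k) = \<psi> 1" .
      then have "(p * k) mod m = 1 mod m" by (rule psieq)
      then have "(p * k) mod m = 1" using m1 by simp
      moreover have "p dvd (p * k) mod m" using p(2) dvd_mod dvd_triv_left by blast
      ultimately have "p dvd 1" by simp
      then show False using p(1) by (simp add: prime_nat_iff)
    qed
  qed
  have uniq: "q = p" if p: "Factorial_Ring.prime p" "p dvd m" and q: "Factorial_Ring.prime q" "q dvd m" for p q
  proof (rule ccontr)
    assume ne: "q \<noteq> p"
    have "coprime p q" using p(1) q(1) ne primes_coprime by metis
    then have "gcd p q = 1" by simp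
    moreover have "p \<noteq> 0" using p(1) by (simp add: prime_nat_iff)
    ultimately obtain x y where xy: "p * x = q * y + 1" using bezout_nat[of p q] by auto
    have a: "\<psi> (p * x) \<in> M"
      using ideal.I_r_closed[OF M_ideal nonunit[OF p] psic[of x]] psimult[of p x] by simp
    have b: "\<psi> (q * y) \<in> M"
      using ideal.I_r_closed[OF M_ideal nonunit[OF q] psic[of y]] psimult[of q y] by simp
    have "\<psi> (p * x) = \<psi> (q * y + 1)" using xy by simp
    also have "\<dots> = \<psi> (q * y) \<oplus> \<psi> 1" by (rule psiadd[symmetric])
    also have "\<psi> 1 = \<one>" unfolding \<psi>_def by simp
    finally have e: "\<psi> (p * x) = \<psi> (q * y) \<oplus> \<one>" .
    have "\<one> = \<psi> (p * x) \<ominus> \<psi> (q * y)" using psic[of "p * x"] psic[of "q * y"] e by algebra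
    also have "\<dots> \<in> M" using a b M_ideal
      by (simp add: ideal.axioms(1) additive_subgroup.a_closed additive_subgroup.a_inv_closed a_minus_def)
    finally show False using one_notin_M by simp
  qed
  obtain p where p: "Factorial_Ring.prime p" "p dvd m" using prime_factor_nat[of m] m1 by auto
  obtain y where y: "m = p ^ multiplicity p m * y" "\<not> p dvd y"
  proof (rule multiplicity_decompose')
    show "m \<noteq> 0" using m1 by simp
    show "\<not> is_unit p" using p(1) by (simp add: prime_nat_iff)
  qed
  have "y = 1"
  proof (rule ccontr)
    assume "y \<noteq> 1"
    then obtain q where q: "Factorial_Ring.prime q" "q dvd y" using prime_factor_nat by auto
    then have "q dvd m" using y(1) by (metis dvd_mult)
    then have "q = p" using uniq[OF p] q(1) by simp
    then show False using q y(2) by simp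
  qed
  define n where "n = multiplicity p m"
  have mpn: "m = p ^ n" using y \<open>y = 1\<close> unfolding n_def by simp
  have n0: "n > 0" using mpn m1 by (cases n) auto
  have oddp: "odd p" using p(2) odd unfolding m_def using dvd_trans by blast
  define h where "h = (\<lambda>c::int. \<psi> (nat c))"
  have Rm: "residue_ring (int m) = residue_ring (int p ^ n)" using mpn by simp
  have iso: "h \<in> ring_iso (residue_ring (int m)) R"
  proof (rule ring_iso_memI)
    fix x assume "x \<in> carrier (residue_ring (int m))"
    show "h x \<in> carrier R" unfolding h_def using psic by simp
  next
    fix x y assume x: "x \<in> carrier (residue_ring (int m))" and y: "y \<in> carrier (residue_ring (int m))"
    have x0: "x \<ge> 0" and y0: "y \<ge> 0" using x y by (auto simp: residue_ring_def)
    have "h (x \<otimes>\<^bsub>residue_ring (int m)\<^esub> y) = \<psi> (nat ((x * y) mod int m))"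
      by (simp add: residue_ring_def h_def)
    also have "nat ((x * y) mod int m) = (nat x * nat y) mod m"
      using x0 y0 by (simp add: nat_mod_distrib nat_mult_distrib)
    also have "\<psi> \<dots> = \<psi> (nat x * nat y)" by (rule psimod[symmetric])
    also have "\<dots> = h x \<otimes> h y" unfolding h_def using psimult by simp
    finally show "h (x \<otimes>\<^bsub>residue_ring (int m)\<^esub> y) = h x \<otimes> h y" .
    have "h (x \<oplus>\<^bsub>residue_ring (int m)\<^esub> y) = \<psi> (nat ((x + y) mod int m))"
      by (simp add: residue_ring_def h_def)
    also have "nat ((x + y) mod int m) = (nat x + nat y) mod m"
      using x0 y0 by (simp add: nat_mod_distrib nat_add_distrib)
    also have "\<psi> \<dots> = \<psi> (nat x + nat y)" by (rule psimod[symmetric])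
    also have "\<dots> = h x \<oplus> h y" unfolding h_def using psiadd by simp
    finally show "h (x \<oplus>\<^bsub>residue_ring (int m)\<^esub> y) = h x \<oplus> h y" .
  next
    show "h \<one>\<^bsub>residue_ring (int m)\<^esub> = \<one>" by (simp add: residue_ring_def h_def \<psi>_def)
  next
    have c: "carrier (residue_ring (int m)) = {0..int m - 1}" by (simp add: residue_ring_def)
    have b1: "bij_betw nat {0..int m - 1} {..<m}"
    proof (rule bij_betw_imageI)
      show "inj_on nat {0..int m - 1}" by (auto simp: inj_on_def)
      show "nat ` {0..int m - 1} = {..<m}"
      proof
        show "nat ` {0..int m - 1} \<subseteq> {..<m}" by auto
        show "{..<m} \<subseteq> nat ` {0..int m - 1}"
        proof
          fix k assume "k \<in> {..<m}"
          then have "int k \<in> {0..int m - 1}" "nat (int k) = k" by auto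
          then show "k \<in> nat ` {0..int m - 1}" by (metis imageI)
        qed
      qed
    qed
    have b2: "bij_betw \<psi> {..<m} (carrier R)" using inj img by (simp add: bij_betw_def)
    show "bij_betw h (carrier (residue_ring (int m))) (carrier R)"
      unfolding c h_def using bij_betw_trans[OF b1 b2] by (simp add: comp_def)
  qed
  have "residue_ring (int m) \<simeq> R" using iso unfolding is_ring_iso_def by auto
  moreover have "ring (residue_ring (int m))" using residue_ring_ring m1 by simp
  ultimately have "R \<simeq> residue_ring (int m)" using ring_iso_sym by blast
  then show ?thesis using p(1) oddp n0 Rm by auto
qed

lemma iso_all_pow:
  assumes "Factorial_Ring.prime (p::nat)" "n > 0" "R \<simeq> residue_ring (int p ^ n)"
  shows "\<forall>a\<in>carrier R. \<exists>k::nat. a = add_pow R k \<one>"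
proof
  fix a assume a: "a \<in> carrier R"
  define mm where "mm = int p ^ n"
  have mm1: "mm > 1" unfolding mm_def using assms(1,2)
    by (metis of_nat_1 of_nat_less_iff of_nat_power one_less_power prime_gt_1_nat)
  obtain f where f: "f \<in> ring_iso R (residue_ring mm)" using assms(3) unfolding is_ring_iso_def mm_def by auto
  define g where "g = inv_into (carrier R) f"
  have g: "g \<in> ring_iso (residue_ring mm) R" unfolding g_def by (rule ring_iso_set_sym[OF ring_axioms f])
  have ghom: "g \<in> ring_hom (residue_ring mm) R" using g unfolding ring_iso_def by simp
  have fa: "f a \<in> carrier (residue_ring mm)" using f a unfolding ring_iso_def by (auto simp: ring_hom_closed)
  have ga: "g (f a) = a" unfolding g_def using f a unfolding ring_iso_def bij_betw_def by (simp add: inv_into_f_f)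
  define c where "c = f a"
  have c0: "0 \<le> c" "c < mm" using fa unfolding c_def by (auto simp: residue_ring_def)
  have "add_pow (residue_ring mm) (nat c) \<one>\<^bsub>residue_ring mm\<^esub> = int (nat c) mod mm"
    by (rule res_pow_one[OF mm1])
  also have "\<dots> = c" using c0 by simp
  finally have cc: "c = add_pow (residue_ring mm) (nat c) \<one>\<^bsub>residue_ring mm\<^esub>" by simp
  have "a = g c" using ga c_def by simp
  also have "\<dots> = add_pow R (nat c) (g \<one>\<^bsub>residue_ring mm\<^esub>)"
    apply (subst cc)
    apply (rule hom_add_pow[OF ghom])
      apply (simp add: residue_ring_def mm1)
     apply (rule residue_ring_ring[OF mm1])
    apply (rule ring_axioms)
    done
  also have "g \<one>\<^bsub>residue_ring mm\<^esub> = \<one>" using ghom by (simp add: ring_hom_one)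
  finally show "\<exists>k::nat. a = add_pow R k \<one>" by blast
qed

end

locale prodset =
  fixes Rs :: "'a ring list"
  assumes rings: "\<And>i. i < length Rs \<Longrightarrow> cring (Rs ! i)"
    and nz: "\<And>i. i < length Rs \<Longrightarrow> \<one>\<^bsub>Rs ! i\<^esub> \<noteq> \<zero>\<^bsub>Rs ! i\<^esub>"
begin

abbreviation "PP \<equiv> RDirProd_list Rs"

lemma ringP: "ring PP"
  by (rule RDirProd_list_is_ring) (simp add: rings cring.axioms(1))

sublocale P: ring PP by (rule ringP)

lemma ring_i: "i < length Rs \<Longrightarrow> ring (Rs ! i)" using rings cring.axioms(1) by blast

lemma carrierP: "x \<in> carrier PP \<longleftrightarrow> length x = length Rs \<and> (\<forall>i<length Rs. x ! i \<in> carrier (Rs ! i))"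
  using RDirProd_list_carrier_mem RDirProd_list_carrier_memI by metis

lemma eqP: "x \<in> carrier PP \<Longrightarrow> y \<in> carrier PP \<Longrightarrow> (\<And>i. i < length Rs \<Longrightarrow> x ! i = y ! i) \<Longrightarrow> x = y"
  by (rule nth_equalityI) (simp_all add: carrierP)

lemma neg_nth:
  assumes x: "x \<in> carrier PP" and i: "i < length Rs"
  shows "(\<ominus>\<^bsub>PP\<^esub> x) ! i = \<ominus>\<^bsub>Rs ! i\<^esub> (x ! i)"
proof -
  interpret Ri: ring "Rs ! i" using ring_i[OF i] .
  have "x \<oplus>\<^bsub>PP\<^esub> \<ominus>\<^bsub>PP\<^esub> x = \<zero>\<^bsub>PP\<^esub>" by (rule P.r_neg[OF x])
  then have "x ! i \<oplus>\<^bsub>Rs ! i\<^esub> (\<ominus>\<^bsub>PP\<^esub> x) ! i = \<zero>\<^bsub>Rs ! i\<^esub>"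
    using P_add_nth[OF x _ i, of "\<ominus>\<^bsub>PP\<^esub> x"] P_zero_nth[OF i] x by simp
  moreover have "x ! i \<in> carrier (Rs ! i)" "(\<ominus>\<^bsub>PP\<^esub> x) ! i \<in> carrier (Rs ! i)"
    using x i carrierP P.add.inv_closed by blast+
  ultimately show ?thesis using Ri.add.inv_equality Ri.a_comm by metis
qed

lemma minus_nth:
  assumes x: "x \<in> carrier PP" and y: "y \<in> carrier PP" and i: "i < length Rs"
  shows "(x \<ominus>\<^bsub>PP\<^esub> y) ! i = x ! i \<ominus>\<^bsub>Rs ! i\<^esub> y ! i"
  using P_add_nth[OF x _ i, of "\<ominus>\<^bsub>PP\<^esub> y"] neg_nth[OF y i] y by (simp add: a_minus_def)

definition dlt :: "nat \<Rightarrow> 'a \<Rightarrow> 'a list" where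
  "dlt j a = (\<zero>\<^bsub>PP\<^esub>)[j := a]"

lemma dlt_nth: "i < length Rs \<Longrightarrow> dlt j a ! i = (if i = j then a else \<zero>\<^bsub>Rs ! i\<^esub>)"
  unfolding dlt_def using P.zero_closed carrierP P_zero_nth[of i Rs] by (simp add: nth_list_update)

lemma dlt_carrier: "j < length Rs \<Longrightarrow> a \<in> carrier (Rs ! j) \<Longrightarrow> dlt j a \<in> carrier PP"
  unfolding carrierP using dlt_nth P.zero_closed carrierP ring.ring_simprules(2)[OF ring_i]
  by (simp add: dlt_def)

lemma dlt_add:
  assumes "j < length Rs" "a \<in> carrier (Rs ! j)" "b \<in> carrier (Rs ! j)"
  shows "dlt j a \<oplus>\<^bsub>PP\<^esub> dlt j b = dlt j (a \<oplus>\<^bsub>Rs ! j\<^esub> b)"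
proof (rule eqP)
  show "dlt j a \<oplus>\<^bsub>PP\<^esub> dlt j b \<in> carrier PP" using dlt_carrier assms by simp
  show "dlt j (a \<oplus>\<^bsub>Rs ! j\<^esub> b) \<in> carrier PP" using dlt_carrier assms ring.ring_simprules(1)[OF ring_i] by simp
  fix i assume i: "i < length Rs"
  show "(dlt j a \<oplus>\<^bsub>PP\<^esub> dlt j b) ! i = dlt j (a \<oplus>\<^bsub>Rs ! j\<^esub> b) ! i"
    using P_add_nth[OF dlt_carrier[OF assms(1,2)] dlt_carrier[OF assms(1,3)] i] dlt_nth[OF i]
      ring.ring_simprules(15)[OF ring_i[OF i]] ring.ring_simprules(2)[OF ring_i[OF i]] by simp
qed

lemma dlt_zero: "j < length Rs \<Longrightarrow> dlt j \<zero>\<^bsub>Rs ! j\<^esub> = \<zero>\<^bsub>PP\<^esub>"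
  by (rule eqP) (auto simp: dlt_carrier ring.ring_simprules(2)[OF ring_i] dlt_nth P_zero_nth)

lemma dlt_pow:
  assumes "j < length Rs" "a \<in> carrier (Rs ! j)"
  shows "dlt j (add_pow (Rs ! j) (c::nat) a) = add_pow PP c (dlt j a)"
proof (induct c)
  case 0 then show ?case using dlt_zero[OF assms(1)] by (simp add: add_pow_def)
next
  case (Suc c)
  interpret Rj: ring "Rs ! j" using ring_i[OF assms(1)] .
  have "dlt j (add_pow (Rs ! j) (Suc c) a) = dlt j (add_pow (Rs ! j) c a \<oplus>\<^bsub>Rs ! j\<^esub> a)" by simp
  also have "\<dots> = dlt j (add_pow (Rs ! j) c a) \<oplus>\<^bsub>PP\<^esub> dlt j a"
    using dlt_add[OF assms(1)] assms(2) by simp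
  also have "\<dots> = add_pow PP (Suc c) (dlt j a)" using Suc by simp
  finally show ?case .
qed

end

lemma local_flocal:
  assumes "local_ring R" "finite (carrier R)"
  shows "flocal R (THE I. maximalideal I R)"
proof -
  have c: "cring R" and u: "\<exists>!I. maximalideal I R" using assms(1) unfolding local_ring_def by auto
  have m: "maximalideal (THE I. maximalideal I R) R" using theI'[OF u] .
  show ?thesis
    by (intro flocal.intro c flocal_axioms.intro) (use m u assms(2) in auto)
qed

context flocal
begin

lemma even_step:
  assumes "even (card (carrier R))" "a \<in> carrier R" "u \<in> Inv R"
  shows "(a \<in> M \<longrightarrow> (a \<ominus> u) \<ominus> \<one> \<in> M) \<and> (a \<ominus> \<one> \<in> M \<longrightarrow> a \<ominus> u \<in> M)"
proof -
  have u: "u \<in> carrier R" using assms(3) by (simp add: Inv_def)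
  have u1: "u \<ominus> \<one> \<in> M" using even_inv[OF assms(1,3)] .
  have two: "\<one> \<oplus> \<one> \<in> M" using even_two_M[OF assms(1)] .
  have sub: "x \<ominus> y \<in> M" if "x \<in> M" "y \<in> M" for x y
    using that M_ideal by (simp add: ideal.axioms(1) additive_subgroup.a_closed additive_subgroup.a_inv_closed a_minus_def)
  have e1: "(a \<ominus> u) \<ominus> \<one> = (a \<ominus> (u \<ominus> \<one>)) \<ominus> (\<one> \<oplus> \<one>)" using u assms(2) by algebra
  have e2: "a \<ominus> u = (a \<ominus> \<one>) \<ominus> (u \<ominus> \<one>)" using u assms(2) by algebra
  show ?thesis using e1 e2 sub u1 two by simp
qed

lemma odd_two_gen:
  assumes "odd (card (carrier R))"
  shows "\<exists>c::nat. add_pow R (k::nat) \<one> = add_pow R c (\<one> \<oplus> \<one>)"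
proof -
  define m where "m = card (carrier R)"
  define c where "c = ((m + 1) div 2) * k"
  have ev: "even (m + 1)" using assms unfolding m_def by simp
  have e: "2 * ((m + 1) div 2) = m + 1" using ev by simp
  have c2: "2 * c = (m + 1) * k" unfolding c_def using e by (metis mult.assoc)
  have two: "add_pow R (2::nat) \<one> = \<one> \<oplus> \<one>" by (simp add: numeral_2_eq_2)
  have "add_pow R c (\<one> \<oplus> \<one>) = add_pow R c (add_pow R (2::nat) \<one>)" using two by simp
  also have "\<dots> = add_pow R (2 * c) \<one>" by (rule nat_pow_pow') simp
  also have "\<dots> = add_pow R ((m + 1) * k) \<one>" using c2 by simp
  also have "\<dots> = add_pow R (((m + 1) * k) mod m) \<one>" unfolding m_def by (rule pow_mod)
  also have "((m + 1) * k) mod m = k mod m" by (simp add: algebra_simps)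
  also have "add_pow R (k mod m) \<one> = add_pow R k \<one>" unfolding m_def by (rule pow_mod[symmetric])
  finally show ?thesis by metis
qed

end

context prodset
begin

lemma proj_edge:
  assumes "(x, y) \<in> inv_cayley_edges PP" "i < length Rs"
  shows "(x ! i, y ! i) \<in> inv_cayley_edges (Rs ! i)"
proof -
  interpret Ri: ring "Rs ! i" using ring_i[OF assms(2)] .
  have xy: "x \<in> carrier PP" "y \<in> carrier PP" "(x \<ominus>\<^bsub>PP\<^esub> y) \<otimes>\<^bsub>PP\<^esub> (x \<ominus>\<^bsub>PP\<^esub> y) = \<one>\<^bsub>PP\<^esub>"
    using assms(1) by (auto simp: inv_cayley_edges_def)
  have ci: "x ! i \<in> carrier (Rs ! i)" "y ! i \<in> carrier (Rs ! i)" using xy assms(2) carrierP by auto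
  have "((x \<ominus>\<^bsub>PP\<^esub> y) \<otimes>\<^bsub>PP\<^esub> (x \<ominus>\<^bsub>PP\<^esub> y)) ! i = \<one>\<^bsub>PP\<^esub> ! i" using xy by simp
  then have sq: "(x ! i \<ominus>\<^bsub>Rs ! i\<^esub> y ! i) \<otimes>\<^bsub>Rs ! i\<^esub> (x ! i \<ominus>\<^bsub>Rs ! i\<^esub> y ! i) = \<one>\<^bsub>Rs ! i\<^esub>"
    using P_mult_nth[OF P.minus_closed[OF xy(1,2)] P.minus_closed[OF xy(1,2)] assms(2)]
      minus_nth[OF xy(1,2) assms(2)] P_one_nth[OF assms(2)] by simp
  have "x ! i \<noteq> y ! i"
  proof
    assume "x ! i = y ! i"
    then have "(x ! i \<ominus>\<^bsub>Rs ! i\<^esub> y ! i) = \<zero>\<^bsub>Rs ! i\<^esub>" using ci by simp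
    then show False using sq nz[OF assms(2)] by simp
  qed
  then show ?thesis using ci sq by (simp add: inv_cayley_edges_def)
qed

lemma proj_reach:
  assumes "(x, y) \<in> (inv_cayley_edges PP)\<^sup>*" "i < length Rs"
  shows "(x ! i, y ! i) \<in> (inv_cayley_edges (Rs ! i))\<^sup>*"
  using assms(1)
proof (induct rule: rtrancl_induct)
  case base then show ?case by simp
next
  case (step y z)
  then show ?case using proj_edge[OF step(2) assms(2)] by (meson rtrancl.rtrancl_into_rtrancl)
qed

lemma conn_factor:
  assumes "inv_cayley_connected PP" "i < length Rs"
  shows "inv_cayley_connected (Rs ! i)"
proof -
  interpret Ri: ring "Rs ! i" using ring_i[OF assms(2)] .
  show ?thesis unfolding Ri.conn_iff0
  proof
    fix a assume a: "a \<in> carrier (Rs ! i)"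
    have "(\<zero>\<^bsub>PP\<^esub>, dlt i a) \<in> (inv_cayley_edges PP)\<^sup>*"
      using assms(1) dlt_carrier[OF assms(2) a] unfolding P.conn_iff0 by simp
    from proj_reach[OF this assms(2)] show "(\<zero>\<^bsub>Rs ! i\<^esub>, a) \<in> (inv_cayley_edges (Rs ! i))\<^sup>*"
      using P_zero_nth[OF assms(2)] dlt_nth[OF assms(2)] by simp
  qed
qed

lemma Inv_nth:
  assumes "u \<in> Inv PP" "i < length Rs"
  shows "u ! i \<in> Inv (Rs ! i)"
proof -
  have u: "u \<in> carrier PP" "u \<otimes>\<^bsub>PP\<^esub> u = \<one>\<^bsub>PP\<^esub>" using assms(1) by (auto simp: Inv_def)
  have "(u \<otimes>\<^bsub>PP\<^esub> u) ! i = \<one>\<^bsub>PP\<^esub> ! i" using u by simp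
  then have "u ! i \<otimes>\<^bsub>Rs ! i\<^esub> u ! i = \<one>\<^bsub>Rs ! i\<^esub>"
    using P_mult_nth[OF u(1) u(1) assms(2)] P_one_nth[OF assms(2)] by simp
  then show ?thesis using u(1) assms(2) carrierP by (simp add: Inv_def)
qed

lemma upd_one_Inv:
  assumes "j < length Rs" "w \<in> Inv (Rs ! j)"
  shows "(\<one>\<^bsub>PP\<^esub>)[j := w] \<in> Inv PP"
proof -
  have w: "w \<in> carrier (Rs ! j)" "w \<otimes>\<^bsub>Rs ! j\<^esub> w = \<one>\<^bsub>Rs ! j\<^esub>" using assms(2) by (auto simp: Inv_def)
  have l1: "length (\<one>\<^bsub>PP\<^esub>) = length Rs" using P.one_closed carrierP by blast
  have nth1: "(\<one>\<^bsub>PP\<^esub>)[j := w] ! i = (if i = j then w else \<one>\<^bsub>Rs ! i\<^esub>)" if "i < length Rs" for i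
    using that l1 P_one_nth[OF that] by (simp add: nth_list_update)
  have c: "(\<one>\<^bsub>PP\<^esub>)[j := w] \<in> carrier PP"
    unfolding carrierP using l1 nth1 w ring.ring_simprules(6)[OF ring_i] by simp
  have "(\<one>\<^bsub>PP\<^esub>)[j := w] \<otimes>\<^bsub>PP\<^esub> (\<one>\<^bsub>PP\<^esub>)[j := w] = \<one>\<^bsub>PP\<^esub>"
  proof (rule eqP)
    show "(\<one>\<^bsub>PP\<^esub>)[j := w] \<otimes>\<^bsub>PP\<^esub> (\<one>\<^bsub>PP\<^esub>)[j := w] \<in> carrier PP" using c by simp
    show "\<one>\<^bsub>PP\<^esub> \<in> carrier PP" by simp
    fix i assume i: "i < length Rs"
    show "((\<one>\<^bsub>PP\<^esub>)[j := w] \<otimes>\<^bsub>PP\<^esub> (\<one>\<^bsub>PP\<^esub>)[j := w]) ! i = \<one>\<^bsub>PP\<^esub> ! i"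
      using P_mult_nth[OF c c i] nth1[OF i] w P_one_nth[OF i] ring.ring_simprules(6,12)[OF ring_i[OF i]]
      by simp
  qed
  then show ?thesis using c by (simp add: Inv_def)
qed

lemma trunc_reach:
  assumes y: "y \<in> carrier PP"
    and h: "\<And>j. j < length Rs \<Longrightarrow> (\<zero>\<^bsub>PP\<^esub>, dlt j (y ! j)) \<in> (inv_cayley_edges PP)\<^sup>*"
  shows "(\<zero>\<^bsub>PP\<^esub>, y) \<in> (inv_cayley_edges PP)\<^sup>*"
proof -
  define T where "T = (\<lambda>k. map (\<lambda>i. if i < k then y ! i else \<zero>\<^bsub>Rs ! i\<^esub>) [0..<length Rs])"
  have Tnth: "T k ! i = (if i < k then y ! i else \<zero>\<^bsub>Rs ! i\<^esub>)" if "i < length Rs" for k i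
    using that unfolding T_def by simp
  have Tc: "T k \<in> carrier PP" for k
    unfolding carrierP using Tnth y carrierP ring.ring_simprules(2)[OF ring_i] by (simp add: T_def)
  have "(\<zero>\<^bsub>PP\<^esub>, T k) \<in> (inv_cayley_edges PP)\<^sup>*" for k
  proof (induct k)
    case 0
    have "T 0 = \<zero>\<^bsub>PP\<^esub>" by (rule eqP) (simp_all add: Tc Tnth P_zero_nth)
    then show ?case by simp
  next
    case (Suc k)
    show ?case
    proof (cases "k < length Rs")
      case True
      have yk: "y ! k \<in> carrier (Rs ! k)" using y True carrierP by blast
      have "T (Suc k) = T k \<oplus>\<^bsub>PP\<^esub> dlt k (y ! k)"
      proof (rule eqP)
        show "T (Suc k) \<in> carrier PP" by (rule Tc)
        show "T k \<oplus>\<^bsub>PP\<^esub> dlt k (y ! k) \<in> carrier PP" using Tc dlt_carrier[OF True yk] by simp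
        fix i assume i: "i < length Rs"
        have yi: "y ! i \<in> carrier (Rs ! i)" using y i carrierP by blast
        show "T (Suc k) ! i = (T k \<oplus>\<^bsub>PP\<^esub> dlt k (y ! k)) ! i"
          using P_add_nth[OF Tc dlt_carrier[OF True yk] i] Tnth[OF i] dlt_nth[OF i]
            ring.ring_simprules(2,8,15)[OF ring_i[OF i]] yi by auto
      qed
      then show ?thesis using P.reach_add[OF Suc h[OF True]] by simp
    next
      case False
      have "T (Suc k) = T k" unfolding T_def using False by (intro map_cong) auto
      then show ?thesis using Suc by simp
    qed
  qed
  moreover have "T (length Rs) = y" by (rule eqP) (simp_all add: Tc Tnth y)
  ultimately show ?thesis by metis
qed

end

context prodset
begin

lemma upd_one_nth:
  assumes "i < length Rs"
  shows "(\<one>\<^bsub>PP\<^esub>)[j := w] ! i = (if i = j then w else \<one>\<^bsub>Rs ! i\<^esub>)"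
proof -
  have l1: "length (\<one>\<^bsub>PP\<^esub>) = length Rs" using P.one_closed carrierP by blast
  show ?thesis using assms l1 P_one_nth[OF assms] by (simp add: nth_list_update)
qed

lemma upd_one_carrier:
  assumes "j < length Rs" "w \<in> carrier (Rs ! j)"
  shows "(\<one>\<^bsub>PP\<^esub>)[j := w] \<in> carrier PP"
proof -
  have l1: "length (\<one>\<^bsub>PP\<^esub>) = length Rs" using P.one_closed carrierP by blast
  show ?thesis unfolding carrierP using l1 upd_one_nth assms ring.ring_simprules(6)[OF ring_i] by simp
qed

lemma odd_delta:
  assumes j: "j < length Rs" and fl: "flocal (Rs ! j) Mj" and odd: "odd (card (carrier (Rs ! j)))"
    and all: "\<forall>a\<in>carrier (Rs ! j). \<exists>k::nat. a = add_pow (Rs ! j) k \<one>\<^bsub>Rs ! j\<^esub>"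
    and a: "a \<in> carrier (Rs ! j)"
  shows "(\<zero>\<^bsub>PP\<^esub>, dlt j a) \<in> (inv_cayley_edges PP)\<^sup>*"
proof -
  interpret Rj: flocal "Rs ! j" Mj by (rule fl)
  define v where "v = (\<one>\<^bsub>PP\<^esub>)[j := \<ominus>\<^bsub>Rs ! j\<^esub> \<one>\<^bsub>Rs ! j\<^esub>]"
  have mI: "\<ominus>\<^bsub>Rs ! j\<^esub> \<one>\<^bsub>Rs ! j\<^esub> \<in> Inv (Rs ! j)"
    unfolding Inv_def by (simp add: Rj.l_minus Rj.r_minus)
  have vI: "v \<in> Inv PP" unfolding v_def by (rule upd_one_Inv[OF j mI])
  have vc: "v \<in> carrier PP" using vI by (simp add: Inv_def)
  have oneI: "\<one>\<^bsub>PP\<^esub> \<in> Inv PP" by (simp add: Inv_def)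
  have r1: "(\<zero>\<^bsub>PP\<^esub>, \<one>\<^bsub>PP\<^esub> \<ominus>\<^bsub>PP\<^esub> v) \<in> (inv_cayley_edges PP)\<^sup>*"
    by (rule P.reach_sub[OF P.reach_inv[OF oneI] P.reach_inv[OF vI]])
  have eq: "\<one>\<^bsub>PP\<^esub> \<ominus>\<^bsub>PP\<^esub> v = dlt j (\<one>\<^bsub>Rs ! j\<^esub> \<oplus>\<^bsub>Rs ! j\<^esub> \<one>\<^bsub>Rs ! j\<^esub>)"
  proof (rule eqP)
    show "\<one>\<^bsub>PP\<^esub> \<ominus>\<^bsub>PP\<^esub> v \<in> carrier PP" using vc by simp
    show "dlt j (\<one>\<^bsub>Rs ! j\<^esub> \<oplus>\<^bsub>Rs ! j\<^esub> \<one>\<^bsub>Rs ! j\<^esub>) \<in> carrier PP" using dlt_carrier[OF j] by simp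
    fix i assume i: "i < length Rs"
    interpret Ri: ring "Rs ! i" using ring_i[OF i] .
    show "(\<one>\<^bsub>PP\<^esub> \<ominus>\<^bsub>PP\<^esub> v) ! i = dlt j (\<one>\<^bsub>Rs ! j\<^esub> \<oplus>\<^bsub>Rs ! j\<^esub> \<one>\<^bsub>Rs ! j\<^esub>) ! i"
      using minus_nth[OF P.one_closed vc i] P_one_nth[OF i] upd_one_nth[OF i] dlt_nth[OF i]
      unfolding v_def by (auto simp: a_minus_def Ri.r_neg)
  qed
  obtain k :: nat where k: "a = add_pow (Rs ! j) k \<one>\<^bsub>Rs ! j\<^esub>" using all a by blast
  obtain c :: nat where c: "add_pow (Rs ! j) k \<one>\<^bsub>Rs ! j\<^esub> = add_pow (Rs ! j) c (\<one>\<^bsub>Rs ! j\<^esub> \<oplus>\<^bsub>Rs ! j\<^esub> \<one>\<^bsub>Rs ! j\<^esub>)"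
    using Rj.odd_two_gen[OF odd] by blast
  have "dlt j a = add_pow PP c (dlt j (\<one>\<^bsub>Rs ! j\<^esub> \<oplus>\<^bsub>Rs ! j\<^esub> \<one>\<^bsub>Rs ! j\<^esub>))"
    using k c dlt_pow[OF j, of "\<one>\<^bsub>Rs ! j\<^esub> \<oplus>\<^bsub>Rs ! j\<^esub> \<one>\<^bsub>Rs ! j\<^esub>" c] by simp
  then show ?thesis using P.reach_pow[OF r1[unfolded eq]] by simp
qed

lemma even_delta:
  assumes e: "e < length Rs" and conn: "inv_cayley_connected (Rs ! e)"
    and z: "(\<zero>\<^bsub>PP\<^esub>, (\<one>\<^bsub>PP\<^esub>)[e := \<zero>\<^bsub>Rs ! e\<^esub>]) \<in> (inv_cayley_edges PP)\<^sup>*"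
    and a: "a \<in> carrier (Rs ! e)"
  shows "(\<zero>\<^bsub>PP\<^esub>, dlt e a) \<in> (inv_cayley_edges PP)\<^sup>*"
proof -
  interpret Re: ring "Rs ! e" using ring_i[OF e] .
  have path: "(\<zero>\<^bsub>Rs ! e\<^esub>, a) \<in> (inv_cayley_edges (Rs ! e))\<^sup>*" using conn a unfolding Re.conn_iff0 by simp
  define zz where "zz = (\<one>\<^bsub>PP\<^esub>)[e := \<zero>\<^bsub>Rs ! e\<^esub>]"
  have zzc: "zz \<in> carrier PP" unfolding zz_def by (rule upd_one_carrier[OF e]) simp
  from path show ?thesis
  proof (induct rule: rtrancl_induct)
    case base then show ?case using dlt_zero[OF e] by simp
  next
    case (step b b')
    have bb: "b \<in> carrier (Rs ! e)" "b' \<in> carrier (Rs ! e)"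
      "(b \<ominus>\<^bsub>Rs ! e\<^esub> b') \<otimes>\<^bsub>Rs ! e\<^esub> (b \<ominus>\<^bsub>Rs ! e\<^esub> b') = \<one>\<^bsub>Rs ! e\<^esub>"
      using step(2) by (auto simp: inv_cayley_edges_def)
    define w where "w = b \<ominus>\<^bsub>Rs ! e\<^esub> b'"
    have wc: "w \<in> carrier (Rs ! e)" using bb unfolding w_def by simp
    have wI: "w \<in> Inv (Rs ! e)" using bb wc unfolding Inv_def w_def by simp
    define v where "v = (\<one>\<^bsub>PP\<^esub>)[e := w]"
    have vI: "v \<in> Inv PP" unfolding v_def by (rule upd_one_Inv[OF e wI])
    have vc: "v \<in> carrier PP" using vI by (simp add: Inv_def)
    have e1: "dlt e w = v \<ominus>\<^bsub>PP\<^esub> zz"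
    proof (rule eqP)
      show "dlt e w \<in> carrier PP" using dlt_carrier[OF e wc] .
      show "v \<ominus>\<^bsub>PP\<^esub> zz \<in> carrier PP" using vc zzc by simp
      fix i assume i: "i < length Rs"
      interpret Ri: ring "Rs ! i" using ring_i[OF i] .
      show "dlt e w ! i = (v \<ominus>\<^bsub>PP\<^esub> zz) ! i"
        using minus_nth[OF vc zzc i] upd_one_nth[OF i] dlt_nth[OF i] wc
        unfolding v_def zz_def by (auto simp: a_minus_def Ri.r_neg)
    qed
    have e2: "dlt e b' = dlt e b \<ominus>\<^bsub>PP\<^esub> dlt e w"
    proof (rule eqP)
      show "dlt e b' \<in> carrier PP" using dlt_carrier[OF e bb(2)] .
      show "dlt e b \<ominus>\<^bsub>PP\<^esub> dlt e w \<in> carrier PP" using dlt_carrier[OF e bb(1)] dlt_carrier[OF e wc] by simp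
      fix i assume i: "i < length Rs"
      interpret Ri: ring "Rs ! i" using ring_i[OF i] .
      have "b' = b \<ominus>\<^bsub>Rs ! e\<^esub> w" unfolding w_def using bb(1,2) by algebra
      then show "dlt e b' ! i = (dlt e b \<ominus>\<^bsub>PP\<^esub> dlt e w) ! i"
        using minus_nth[OF dlt_carrier[OF e bb(1)] dlt_carrier[OF e wc] i] dlt_nth[OF i]
        by (auto simp: a_minus_def)
    qed
    have "(\<zero>\<^bsub>PP\<^esub>, dlt e w) \<in> (inv_cayley_edges PP)\<^sup>*"
      unfolding e1 by (rule P.reach_sub[OF P.reach_inv[OF vI] z[folded zz_def]])
    then show ?case unfolding e2 by (rule P.reach_sub[OF step(3)])
  qed
qed

lemma two_even_contra:
  assumes i: "i < length Rs" and j: "j < length Rs" and ij: "i \<noteq> j"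
    and fi: "flocal (Rs ! i) Mi" and fj: "flocal (Rs ! j) Mj"
    and ei: "even (card (carrier (Rs ! i)))" and ej: "even (card (carrier (Rs ! j)))"
    and conn: "inv_cayley_connected PP"
  shows False
proof -
  interpret Ri: flocal "Rs ! i" Mi by (rule fi)
  interpret Rj: flocal "Rs ! j" Mj by (rule fj)
  define H where "H = {x. (x ! i \<in> Mi \<and> x ! j \<in> Mj) \<or>
     (x ! i \<ominus>\<^bsub>Rs ! i\<^esub> \<one>\<^bsub>Rs ! i\<^esub> \<in> Mi \<and> x ! j \<ominus>\<^bsub>Rs ! j\<^esub> \<one>\<^bsub>Rs ! j\<^esub> \<in> Mj)}"
  define z where "z = dlt i \<one>\<^bsub>Rs ! i\<^esub>"
  have zc: "z \<in> carrier PP" unfolding z_def by (rule dlt_carrier[OF i]) simp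
  have "(\<zero>\<^bsub>PP\<^esub>, z) \<in> (inv_cayley_edges PP)\<^sup>*" using conn zc unfolding P.conn_iff0 by simp
  then have "z \<in> H"
  proof (rule P.reach_closed)
    show "\<zero>\<^bsub>PP\<^esub> \<in> H" unfolding H_def using P_zero_nth[OF i] P_zero_nth[OF j] Ri.zero_in_M Rj.zero_in_M by simp
    fix y u assume yH: "y \<in> H" and yc: "y \<in> carrier PP" and u: "u \<in> Inv PP"
    have uc: "u \<in> carrier PP" using u by (simp add: Inv_def)
    have ui: "u ! i \<in> Inv (Rs ! i)" and uj: "u ! j \<in> Inv (Rs ! j)" using Inv_nth u i j by auto
    have yi: "y ! i \<in> carrier (Rs ! i)" and yj: "y ! j \<in> carrier (Rs ! j)" using yc i j carrierP by auto
    have mi: "(y \<ominus>\<^bsub>PP\<^esub> u) ! i = y ! i \<ominus>\<^bsub>Rs ! i\<^esub> u ! i" by (rule minus_nth[OF yc uc i])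
    have mj: "(y \<ominus>\<^bsub>PP\<^esub> u) ! j = y ! j \<ominus>\<^bsub>Rs ! j\<^esub> u ! j" by (rule minus_nth[OF yc uc j])
    show "y \<ominus>\<^bsub>PP\<^esub> u \<in> H"
      using yH Ri.even_step[OF ei yi ui] Rj.even_step[OF ej yj uj] mi mj unfolding H_def by auto
  qed
  moreover have "z ! i = \<one>\<^bsub>Rs ! i\<^esub>" "z ! j = \<zero>\<^bsub>Rs ! j\<^esub>" unfolding z_def using dlt_nth i j ij by auto
  moreover have "\<ominus>\<^bsub>Rs ! j\<^esub> \<one>\<^bsub>Rs ! j\<^esub> \<notin> Mj"
  proof
    assume "\<ominus>\<^bsub>Rs ! j\<^esub> \<one>\<^bsub>Rs ! j\<^esub> \<in> Mj"
    then have "\<ominus>\<^bsub>Rs ! j\<^esub> (\<ominus>\<^bsub>Rs ! j\<^esub> \<one>\<^bsub>Rs ! j\<^esub>) \<in> Mj"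
      by (rule additive_subgroup.a_inv_closed[OF ideal.axioms(1)[OF Rj.M_ideal]])
    then show False using Rj.one_notin_M Rj.minus_minus[OF Rj.one_closed] by simp
  qed
  ultimately show False using Ri.one_notin_M unfolding H_def by (simp add: a_minus_def)
qed

end

theorem mainTheorem1:
  fixes Rs :: "('a ring) list"
  assumes "Rs \<noteq> []"
    and "\<And>i. i < length Rs \<Longrightarrow> local_ring (Rs ! i)"
    and "\<And>i. i < length Rs \<Longrightarrow> finite (carrier (Rs ! i))"
  shows "inv_cayley_connected (RDirProd_list Rs) \<longleftrightarrow>
     ((\<forall>i < length Rs. \<forall>j < length Rs.
          even (card (carrier (Rs ! i))) \<and> even (card (carrier (Rs ! j))) \<longrightarrow> i = j) \<and>
      (\<forall>i < length Rs. even (card (carrier (Rs ! i))) \<longrightarrow> inv_cayley_connected (Rs ! i)) \<and>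
      (\<forall>j < length Rs. odd (card (carrier (Rs ! j))) \<longrightarrow>
          (\<exists>p n. Factorial_Ring.prime (p::nat) \<and> odd p \<and> n > 0 \<and> Rs ! j \<simeq> residue_ring (int p ^ n))))"
proof -
  define Mx where "Mx = (\<lambda>i. THE I. maximalideal I (Rs ! i))"
  have fl: "flocal (Rs ! i) (Mx i)" if "i < length Rs" for i
    unfolding Mx_def using local_flocal assms(2,3) that by blast
  have cr: "cring (Rs ! i)" if "i < length Rs" for i using fl[OF that] by (simp add: flocal_def)
  have nz: "\<one>\<^bsub>Rs ! i\<^esub> \<noteq> \<zero>\<^bsub>Rs ! i\<^esub>" if "i < length Rs" for i using flocal.one_neq_zero[OF fl[OF that]] .
  interpret prodset Rs by (rule prodset.intro) (use cr nz in auto)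
  show ?thesis (is "?L \<longleftrightarrow> ?c1 \<and> ?c2 \<and> ?c3")
  proof
    assume conn: "inv_cayley_connected PP"
    have c1: "\<forall>i < length Rs. \<forall>j < length Rs.
          even (card (carrier (Rs ! i))) \<and> even (card (carrier (Rs ! j))) \<longrightarrow> i = j"
      using two_even_contra[OF _ _ _ fl fl _ _ conn] by blast
    have c2: "\<forall>i < length Rs. even (card (carrier (Rs ! i))) \<longrightarrow> inv_cayley_connected (Rs ! i)"
      using conn_factor[OF conn] by blast
    have c3: "\<forall>j < length Rs. odd (card (carrier (Rs ! j))) \<longrightarrow>
          (\<exists>p n. Factorial_Ring.prime (p::nat) \<and> odd p \<and> n > 0 \<and> Rs ! j \<simeq> residue_ring (int p ^ n))"
    proof (intro allI impI)
      fix j assume j: "j < length Rs" and oj: "odd (card (carrier (Rs ! j)))"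
      interpret Rj: flocal "Rs ! j" "Mx j" by (rule fl[OF j])
      have cj: "inv_cayley_connected (Rs ! j)" using conn_factor[OF conn j] .
      have "\<forall>a\<in>carrier (Rs ! j). \<exists>k::nat. a = add_pow (Rs ! j) k \<one>\<^bsub>Rs ! j\<^esub>"
        using Rj.odd_reach[OF oj] cj unfolding Rj.conn_iff0 by blast
      then show "\<exists>p n. Factorial_Ring.prime (p::nat) \<and> odd p \<and> n > 0 \<and> Rs ! j \<simeq> residue_ring (int p ^ n)"
        using Rj.prime_subring_iso[OF oj] by blast
    qed
    show "?c1 \<and> ?c2 \<and> ?c3" using c1 c2 c3 by blast
  next
    assume "?c1 \<and> ?c2 \<and> ?c3"
    then have c1: "\<And>i j. i < length Rs \<Longrightarrow> j < length Rs \<Longrightarrow>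
          even (card (carrier (Rs ! i))) \<Longrightarrow> even (card (carrier (Rs ! j))) \<Longrightarrow> i = j"
      and c2: "\<And>i. i < length Rs \<Longrightarrow> even (card (carrier (Rs ! i))) \<Longrightarrow> inv_cayley_connected (Rs ! i)"
      and c3: "\<And>j. j < length Rs \<Longrightarrow> odd (card (carrier (Rs ! j))) \<Longrightarrow>
          (\<exists>p n. Factorial_Ring.prime (p::nat) \<and> odd p \<and> n > 0 \<and> Rs ! j \<simeq> residue_ring (int p ^ n))"
      by blast+
    have oddall: "(\<zero>\<^bsub>PP\<^esub>, dlt j a) \<in> (inv_cayley_edges PP)\<^sup>*"
      if j: "j < length Rs" and oj: "odd (card (carrier (Rs ! j)))" and a: "a \<in> carrier (Rs ! j)" for j a
    proof -
      interpret Rj: flocal "Rs ! j" "Mx j" by (rule fl[OF j])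
      obtain p n where pn: "Factorial_Ring.prime (p::nat)" "n > 0" "Rs ! j \<simeq> residue_ring (int p ^ n)"
        using c3[OF j oj] by blast
      show ?thesis using odd_delta[OF j fl[OF j] oj Rj.iso_all_pow[OF pn] a] .
    qed
    have "\<forall>y\<in>carrier PP. (\<zero>\<^bsub>PP\<^esub>, y) \<in> (inv_cayley_edges PP)\<^sup>*"
    proof (cases "\<exists>e < length Rs. even (card (carrier (Rs ! e)))")
      case False
      show ?thesis
      proof
        fix y assume y: "y \<in> carrier PP"
        show "(\<zero>\<^bsub>PP\<^esub>, y) \<in> (inv_cayley_edges PP)\<^sup>*"
        proof (rule trunc_reach[OF y])
          fix j assume j: "j < length Rs"
          show "(\<zero>\<^bsub>PP\<^esub>, dlt j (y ! j)) \<in> (inv_cayley_edges PP)\<^sup>*"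
            using oddall[OF j] False j y carrierP by blast
        qed
      qed
    next
      case True
      then obtain e where e: "e < length Rs" "even (card (carrier (Rs ! e)))" by blast
      have oth: "odd (card (carrier (Rs ! j)))" if "j < length Rs" "j \<noteq> e" for j
        using c1[OF that(1) e(1) _ e(2)] that(2) by blast
      define zz where "zz = (\<one>\<^bsub>PP\<^esub>)[e := \<zero>\<^bsub>Rs ! e\<^esub>]"
      have zzc: "zz \<in> carrier PP" unfolding zz_def by (rule upd_one_carrier[OF e(1)]) (simp add: ring.ring_simprules(2)[OF ring_i[OF e(1)]])
      have zr: "(\<zero>\<^bsub>PP\<^esub>, zz) \<in> (inv_cayley_edges PP)\<^sup>*"
      proof (rule trunc_reach[OF zzc])
        fix j assume j: "j < length Rs"
        show "(\<zero>\<^bsub>PP\<^esub>, dlt j (zz ! j)) \<in> (inv_cayley_edges PP)\<^sup>*"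
        proof (cases "j = e")
          case True
          then show ?thesis using upd_one_nth[OF j] dlt_zero[OF j] unfolding zz_def by simp
        next
          case False
          then show ?thesis using upd_one_nth[OF j] oddall[OF j oth[OF j False]]
              ring.ring_simprules(6)[OF ring_i[OF j]] unfolding zz_def by simp
        qed
      qed
      show ?thesis
      proof
        fix y assume y: "y \<in> carrier PP"
        show "(\<zero>\<^bsub>PP\<^esub>, y) \<in> (inv_cayley_edges PP)\<^sup>*"
        proof (rule trunc_reach[OF y])
          fix j assume j: "j < length Rs"
          have yj: "y ! j \<in> carrier (Rs ! j)" using y j carrierP by blast
          show "(\<zero>\<^bsub>PP\<^esub>, dlt j (y ! j)) \<in> (inv_cayley_edges PP)\<^sup>*"
          proof (cases "j = e")
            case True
            then show ?thesis using even_delta[OF e(1) c2[OF e] zr[unfolded zz_def]] yj by simp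
          next
            case False
            show ?thesis using oddall[OF j oth[OF j False] yj] by simp
          qed
        qed
      qed
    qed
    then show "inv_cayley_connected PP" unfolding P.conn_iff0 .
  qed
qed

end
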